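(* Let $\alpha\in(0,1]$, $r\in\mathbb{R}$ and $\gamma\ge 1$. For every policy $\pi\in\Pi$, $\mathcal{U}^{r,\pi}_{\alpha,\gamma}\subseteq \mathcal{S}^{r,\pi}_\alpha$. Moreover, $\mathcal{U}^{r}_{\alpha,\gamma}\subseteq \mathcal{S}^{r}_\alpha$.
   Context: Setting: $S$, $A$, $W$ are Borel spaces (states, controls, disturbances), $T\in\mathbb{N}$. The sample space is $\Omega = (S\times A)^T\times S$ with its Borel $\sigma$-algebra $\mathcal{B}(\Omega)$; for $\omega=(x_0,u_0,\dots,x_{T-1},u_{T-1},x_T)$, $X_t(\omega)=x_t$ and $U_t(\omega)=u_t$. A Borel-measurable map $f:S\times A\times W\to S$ and a probability distribution $P_D$ on $W$ define the transition kernel $Q(B\mid x,u) = P_D(\{d\in W: f(x,u,d)\in B\})$ for $B\in\mathcal{B}(S)$. $\Pi$ is the set of randomized history-dependent policies $\pi=(\pi_0,\dots,\pi_{T-1})$, each $\pi_t$ a Borel-measurable stochastic kernel on $A$ given $H^t=(S\times A)^t\times S$. For $x\in S$, $\pi\in\Pi$, $P_x^\pi$ is the unique probability measure on $(\Omega,\mathcal{B}(\Omega))$ (Ionescu-Tulcea) under which $X_0=x$, $U_t$ is distributed according to $\pi_t(\cdot\mid X_0,U_0,\dots,X_t)$, and $X_{t+1}$ is distributed according to $Q(\cdot\mid X_t,U_t)$; $E_x^\pi$ denotes expectation under $P_x^\pi$. A constraint set $K\in\mathcal{B}(S)$ and a bounded Borel-measurable $g_K:S\to\mathbb{R}$ are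 given; $G := \max_{t=0,1,\dots,T} g_K(X_t)$. For a probability space $(\Omega,\mathcal{F},\mu)$, $Y\in L^1$ and $\alpha\in(0,1]$, $\mathrm{CVaR}_\alpha(Y) := \inf_{s\in\mathbb{R}}\big(s + \tfrac{1}{\alpha}E(\max(Y-s,0))\big)$. $\mathrm{CVaR}^\pi_{\alpha,x}$ denotes CVaR computed with respect to $P_x^\pi$. Risk-sensitive safe sets: $\mathcal{S}_\alpha^{r,\pi} := \{x\in S : \mathrm{CVaR}^\pi_{\alpha,x}(G)\le r\}$ and $\mathcal{S}_\alpha^{r} := \{x\in S : \inf_{\pi\in\Pi}\mathrm{CVaR}^\pi_{\alpha,x}(G)\le r\}$. Approximation sets: $\mathcal{U}^{r,\pi}_{\alpha,\gamma} := \{x\in S : \tfrac{1}{\alpha}E_x^\pi(\sum_{t=0}^T e^{\gamma g_K(X_t)})\le e^{\gamma r}\}$ and $\mathcal{U}^{r}_{\alpha,\gamma} := \{x\in S : \inf_{\pi\in\Pi}\tfrac{1}{\alpha}E_x^\pi(\sum_{t=0}^T e^{\gamma g_K(X_t)})\le e^{\gamma r}\}$. *)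

theory Defs
  imports "HOL-Probability.Probability"
begin

text \<open>
  States live in the measurable space Sx (carrier type 's), controls in Ax
  (type 'a), disturbances are distributed according to the probability
  measure PD (type 'w).  A history up to time t is a pair (xs, us) with
  xs an extensional function on {..t} (states x_0..x_t) and us an
  extensional function on {..<t} (controls u_0..u_(t-1)).
  The sample space Omega is the history space at time T.
\<close>

definition hist_space :: "'s measure \<Rightarrow> 'a measure \<Rightarrow> nat \<Rightarrow> ((nat \<Rightarrow> 's) \<times> (nat \<Rightarrow> 'a)) measure" where
  "hist_space Sx Ax t = pair_measure (PiM {..t} (\<lambda>_. Sx)) (PiM {..<t} (\<lambda>_. Ax))"

definition trans_kernel :: "'s measure \<Rightarrow> 'w measure \<Rightarrow> ('s \<times> 'a \<times> 'w \<Rightarrow> 's) \<Rightarrow> 's \<Rightarrow> 'a \<Rightarrow> 's measure" where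
  "trans_kernel Sx PD f x u = distr PD Sx (\<lambda>d. f (x, u, d))"

definition policies :: "'s measure \<Rightarrow> 'a measure \<Rightarrow> nat \<Rightarrow> (nat \<Rightarrow> (nat \<Rightarrow> 's) \<times> (nat \<Rightarrow> 'a) \<Rightarrow> 'a measure) set" where
  "policies Sx Ax T = {\<pi>. \<forall>t<T. \<pi> t \<in> hist_space Sx Ax t \<rightarrow>\<^sub>M prob_algebra Ax}"

text \<open>Distribution of the history up to time t (finite-horizon Ionescu-Tulcea construction).\<close>
primrec hist_measure :: "'s measure \<Rightarrow> 'a measure \<Rightarrow> 'w measure \<Rightarrow> ('s \<times> 'a \<times> 'w \<Rightarrow> 's) \<Rightarrow> 's
    \<Rightarrow> (nat \<Rightarrow> (nat \<Rightarrow> 's) \<times> (nat \<Rightarrow> 'a) \<Rightarrow> 'a measure) \<Rightarrow> nat \<Rightarrow> ((nat \<Rightarrow> 's) \<times> (nat \<Rightarrow> 'a)) measure" where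
  "hist_measure Sx Ax PD f x \<pi> 0 =
     return (hist_space Sx Ax 0) (\<lambda>i\<in>{..0}. x, \<lambda>i\<in>{..<0}. undefined)"
| "hist_measure Sx Ax PD f x \<pi> (Suc t) =
     Giry_Monad.bind (hist_measure Sx Ax PD f x \<pi> t) (\<lambda>h.
       Giry_Monad.bind (\<pi> t h) (\<lambda>u.
         Giry_Monad.bind (trans_kernel Sx PD f (fst h t) u) (\<lambda>y.
           return (hist_space Sx Ax (Suc t)) ((fst h)(Suc t := y), (snd h)(t := u)))))"

definition path_measure :: "'s measure \<Rightarrow> 'a measure \<Rightarrow> 'w measure \<Rightarrow> ('s \<times> 'a \<times> 'w \<Rightarrow> 's) \<Rightarrow> nat \<Rightarrow> 's
    \<Rightarrow> (nat \<Rightarrow> (nat \<Rightarrow> 's) \<times> (nat \<Rightarrow> 'a) \<Rightarrow> 'a measure) \<Rightarrow> ((nat \<Rightarrow> 's) \<times> (nat \<Rightarrow> 'a)) measure" where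
  "path_measure Sx Ax PD f T x \<pi> = hist_measure Sx Ax PD f x \<pi> T"

definition CVaR :: "'b measure \<Rightarrow> real \<Rightarrow> ('b \<Rightarrow> real) \<Rightarrow> real" where
  "CVaR M \<alpha> Y = (INF s::real. s + (1 / \<alpha>) * integral\<^sup>L M (\<lambda>\<omega>. max (Y \<omega> - s) 0))"

definition Gmax :: "('s \<Rightarrow> real) \<Rightarrow> nat \<Rightarrow> (nat \<Rightarrow> 's) \<times> (nat \<Rightarrow> 'a) \<Rightarrow> real" where
  "Gmax g T \<omega> = Max ((\<lambda>t. g (fst \<omega> t)) ` {..T})"

definition safe_set_pol where
  "safe_set_pol Sx Ax PD f T g \<alpha> r \<pi> =
     {x \<in> space Sx. CVaR (path_measure Sx Ax PD f T x \<pi>) \<alpha> (Gmax g T) \<le> r}"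

text \<open>Infimum over policies taken in the extended reals (empty infimum = +infinity).\<close>
definition safe_set_inf where
  "safe_set_inf Sx Ax PD f T g \<alpha> r =
     {x \<in> space Sx. (INF \<pi>\<in>policies Sx Ax T. ereal (CVaR (path_measure Sx Ax PD f T x \<pi>) \<alpha> (Gmax g T))) \<le> ereal r}"

definition exp_cost :: "'s measure \<Rightarrow> 'a measure \<Rightarrow> 'w measure \<Rightarrow> ('s \<times> 'a \<times> 'w \<Rightarrow> 's) \<Rightarrow> nat \<Rightarrow> ('s \<Rightarrow> real)
    \<Rightarrow> real \<Rightarrow> real \<Rightarrow> 's \<Rightarrow> (nat \<Rightarrow> (nat \<Rightarrow> 's) \<times> (nat \<Rightarrow> 'a) \<Rightarrow> 'a measure) \<Rightarrow> real" where
  "exp_cost Sx Ax PD f T g \<alpha> \<gamma> x \<pi> =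
     (1 / \<alpha>) * integral\<^sup>L (path_measure Sx Ax PD f T x \<pi>) (\<lambda>\<omega>. \<Sum>t\<le>T. exp (\<gamma> * g (fst \<omega> t)))"

definition approx_set_pol where
  "approx_set_pol Sx Ax PD f T g \<alpha> \<gamma> r \<pi> =
     {x \<in> space Sx. exp_cost Sx Ax PD f T g \<alpha> \<gamma> x \<pi> \<le> exp (\<gamma> * r)}"

definition approx_set_inf where
  "approx_set_inf Sx Ax PD f T g \<alpha> \<gamma> r =
     {x \<in> space Sx. (INF \<pi>\<in>policies Sx Ax T. ereal (exp_cost Sx Ax PD f T g \<alpha> \<gamma> x \<pi>)) \<le> ereal (exp (\<gamma> * r))}"

end

theory Submission imports Defs begin

lemma meas_upd:
  assumes x: "x \<in> N \<rightarrow>\<^sub>M PiM I M" and y: "y \<in> N \<rightarrow>\<^sub>M M i"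
  shows "(\<lambda>\<omega>. (x \<omega>)(i := y \<omega>)) \<in> N \<rightarrow>\<^sub>M PiM (insert i I) M"
proof -
  have "(\<lambda>\<omega> j. (\<lambda>j \<omega>. if j = i then y \<omega> else x \<omega> j) j \<omega>) \<in> N \<rightarrow>\<^sub>M PiM (insert i I) M"
  proof (rule measurable_PiM_single')
    fix j assume "j \<in> insert i I"
    then show "(\<lambda>\<omega>. if j = i then y \<omega> else x \<omega> j) \<in> N \<rightarrow>\<^sub>M M j"
      using y measurable_component_singleton'[OF x measurable_ident_sets[OF refl]]
      by (cases "j = i") auto
  next
    show "(\<lambda>\<omega> j. if j = i then y \<omega> else x \<omega> j) \<in> space N \<rightarrow> (\<Pi>\<^sub>E j\<in>insert i I. space (M j))"
      using measurable_space[OF x] measurable_space[OF y]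
      by (auto simp: space_PiM PiE_def Pi_def extensional_def)
  qed
  moreover have "(\<lambda>\<omega> j. (\<lambda>j \<omega>. if j = i then y \<omega> else x \<omega> j) j \<omega>) = (\<lambda>\<omega>. (x \<omega>)(i := y \<omega>))"
    by (auto simp: fun_eq_iff)
  ultimately show ?thesis by simp
qed

lemma hist_prob:
  assumes PD: "prob_space PD"
    and f_meas: "f \<in> pair_measure Sx (pair_measure Ax PD) \<rightarrow>\<^sub>M Sx"
    and x: "x \<in> space Sx" and pi: "\<pi> \<in> policies Sx Ax T"
  shows "t \<le> T \<Longrightarrow> hist_measure Sx Ax PD f x \<pi> t \<in> space (prob_algebra (hist_space Sx Ax t))"
proof (induction t)
  case 0
  have "(\<lambda>i\<in>{..0::nat}. x, \<lambda>i\<in>{..<0::nat}. undefined) \<in> space (hist_space Sx Ax 0)"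
    using x by (auto simp: hist_space_def space_pair_measure space_PiM)
  then show ?case by (auto simp: space_prob_algebra prob_space_return)
next
  case (Suc t)
  let ?H = "hist_space Sx Ax t" and ?H' = "hist_space Sx Ax (Suc t)"
  have IH: "hist_measure Sx Ax PD f x \<pi> t \<in> space (prob_algebra ?H)" using Suc by simp
  have pit: "\<pi> t \<in> ?H \<rightarrow>\<^sub>M prob_algebra Ax" using pi Suc.prems by (auto simp: policies_def)
  have PDs: "PD \<in> space (prob_algebra PD)" using PD by (simp add: space_prob_algebra)
  have st: "(\<lambda>h. fst h t) \<in> ?H \<rightarrow>\<^sub>M Sx"
    unfolding hist_space_def by measurable
  have F: "(\<lambda>((h,u),y). ((fst h)(Suc t := y), (snd h)(t := u))) \<in> (?H \<Otimes>\<^sub>M Ax) \<Otimes>\<^sub>M Sx \<rightarrow>\<^sub>M ?H'"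
  proof -
    have a: "(\<lambda>p. (fst (fst (fst p)))(Suc t := snd p)) \<in> (?H \<Otimes>\<^sub>M Ax) \<Otimes>\<^sub>M Sx \<rightarrow>\<^sub>M PiM {..Suc t} (\<lambda>_. Sx)"
      unfolding atMost_Suc hist_space_def
      by (rule meas_upd) measurable
    have b: "(\<lambda>p. (snd (fst (fst p)))(t := snd (fst p))) \<in> (?H \<Otimes>\<^sub>M Ax) \<Otimes>\<^sub>M Sx \<rightarrow>\<^sub>M PiM {..<Suc t} (\<lambda>_. Ax)"
      unfolding lessThan_Suc hist_space_def
      by (rule meas_upd) measurable
    show ?thesis using a b unfolding hist_space_def[of _ _ "Suc t"]
      by (auto simp: split_beta' intro!: measurable_Pair)
  qed
  have K: "(\<lambda>(h,u). trans_kernel Sx PD f (fst h t) u) \<in> ?H \<Otimes>\<^sub>M Ax \<rightarrow>\<^sub>M prob_algebra Sx"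
  proof -
    have "(\<lambda>hu. distr ((\<lambda>_. PD) hu) Sx ((\<lambda>hu d. f (fst (fst hu) t, snd hu, d)) hu)) \<in> ?H \<Otimes>\<^sub>M Ax \<rightarrow>\<^sub>M prob_algebra Sx"
    proof (rule measurable_distr_prob_space2[where M=PD])
      show "(\<lambda>_. PD) \<in> ?H \<Otimes>\<^sub>M Ax \<rightarrow>\<^sub>M prob_algebra PD" using PDs by simp
      show "(\<lambda>(hu, d). f (fst (fst hu) t, snd hu, d)) \<in> (?H \<Otimes>\<^sub>M Ax) \<Otimes>\<^sub>M PD \<rightarrow>\<^sub>M Sx"
        using st f_meas by measurable
    qed
    then show ?thesis by (simp add: trans_kernel_def split_beta')
  qed
  have C: "(\<lambda>(h,u). Giry_Monad.bind (trans_kernel Sx PD f (fst h t) u) (\<lambda>y.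
           return ?H' ((fst h)(Suc t := y), (snd h)(t := u)))) \<in> ?H \<Otimes>\<^sub>M Ax \<rightarrow>\<^sub>M prob_algebra ?H'"
  proof -
    have "(\<lambda>hu. Giry_Monad.bind ((\<lambda>(h,u). trans_kernel Sx PD f (fst h t) u) hu)
         ((\<lambda>hu y. return ?H' ((fst (fst hu))(Suc t := y), (snd (fst hu))(t := snd hu))) hu)) \<in> ?H \<Otimes>\<^sub>M Ax \<rightarrow>\<^sub>M prob_algebra ?H'"
    proof (rule measurable_bind_prob_space2[OF K])
      show "(\<lambda>(hu, y). return ?H' ((fst (fst hu))(Suc t := y), (snd (fst hu))(t := snd hu))) \<in> (?H \<Otimes>\<^sub>M Ax) \<Otimes>\<^sub>M Sx \<rightarrow>\<^sub>M prob_algebra ?H'"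
        using measurable_compose[OF F measurable_return_prob_space]
        by (simp add: split_beta')
    qed
    then show ?thesis by (simp add: split_beta')
  qed
  have B: "(\<lambda>h. Giry_Monad.bind (\<pi> t h) (\<lambda>u. Giry_Monad.bind (trans_kernel Sx PD f (fst h t) u) (\<lambda>y.
           return ?H' ((fst h)(Suc t := y), (snd h)(t := u))))) \<in> ?H \<rightarrow>\<^sub>M prob_algebra ?H'"
    using measurable_bind_prob_space2[OF pit C] by (simp add: split_beta')
  have "(\<lambda>_::unit. Giry_Monad.bind (hist_measure Sx Ax PD f x \<pi> t) (\<lambda>h. Giry_Monad.bind (\<pi> t h) (\<lambda>u. Giry_Monad.bind (trans_kernel Sx PD f (fst h t) u) (\<lambda>y.
           return ?H' ((fst h)(Suc t := y), (snd h)(t := u))))))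
      \<in> count_space UNIV \<rightarrow>\<^sub>M prob_algebra ?H'"
    by (rule measurable_bind_prob_space[OF _ B]) (use IH in simp)
  from measurable_space[OF this, of "()"] show ?case by simp
qed

lemma cvar_bound:
  fixes M :: "((nat \<Rightarrow> 's) \<times> (nat \<Rightarrow> 'a)) measure"
  assumes M: "prob_space M" and sM: "sets M = sets (hist_space Sx Ax T)"
    and g_meas: "g \<in> borel_measurable Sx" and g_bdd: "bounded (range g)"
    and \<gamma>: "\<gamma> > 0" and \<alpha>: "0 < \<alpha>" "\<alpha> \<le> 1"
    and hyp: "(1 / \<alpha>) * integral\<^sup>L M (\<lambda>\<omega>. \<Sum>t\<le>T. exp (\<gamma> * g (fst \<omega> t))) \<le> exp (\<gamma> * r)"
  shows "CVaR M \<alpha> (Gmax g T) \<le> r"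
proof -
  interpret prob_space M by fact
  obtain B where B: "\<And>y. \<bar>g y\<bar> \<le> B" using g_bdd by (auto simp: bounded_iff)
  have gt: "(\<lambda>\<omega>. g (fst \<omega> t)) \<in> borel_measurable M" if "t \<le> T" for t
  proof -
    have tT: "t \<in> {..T}" using that by simp
    have "(\<lambda>\<omega>. g (fst \<omega> t)) \<in> borel_measurable (hist_space Sx Ax T)"
      unfolding hist_space_def using g_meas tT by measurable
    then show ?thesis unfolding measurable_cong_sets[OF sM refl] .
  qed
  have Gm: "Gmax g T \<in> borel_measurable M"
    unfolding Gmax_def using gt by (intro borel_measurable_Max) auto
  have GB: "\<bar>Gmax g T \<omega>\<bar> \<le> B" for \<omega>
  proof -
    have "Gmax g T \<omega> \<in> (\<lambda>t. g (fst \<omega> t)) ` {..T}" unfolding Gmax_def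
      by (intro Max_in) auto
    then show ?thesis using B by auto
  qed
  have B0: "0 \<le> B" using B[of undefined] by linarith
  have Gex: "\<exists>t\<le>T. Gmax g T \<omega> = g (fst \<omega> t)" for \<omega>
  proof -
    have "Gmax g T \<omega> \<in> (\<lambda>t. g (fst \<omega> t)) ` {..T}" unfolding Gmax_def
      by (intro Max_in) auto
    then show ?thesis by auto
  qed
  define \<phi> where "\<phi> s = s + (1 / \<alpha>) * integral\<^sup>L M (\<lambda>\<omega>. max (Gmax g T \<omega> - s) 0)" for s
  have GB1: "Gmax g T \<omega> \<le> B" "- B \<le> Gmax g T \<omega>" for \<omega> using GB[of \<omega>] by auto
  have intmax: "integrable M (\<lambda>\<omega>. max (Gmax g T \<omega> - s) 0)" for s
  proof (rule integrable_const_bound[where B="B + \<bar>s\<bar>"])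
    show "AE x in M. norm (max (Gmax g T x - s) 0) \<le> B + \<bar>s\<bar>"
      by (rule AE_I2) (use GB1 in \<open>smt (verit) real_norm_def\<close>)
    show "(\<lambda>\<omega>. max (Gmax g T \<omega> - s) 0) \<in> borel_measurable M" using Gm by measurable
  qed
  have bdd: "bdd_below (range \<phi>)"
  proof (rule bdd_belowI[where m="-B"])
    fix y assume "y \<in> range \<phi>"
    then obtain s where y: "y = \<phi> s" by auto
    have I: "integral\<^sup>L M (\<lambda>\<omega>. max (-B - s) 0) \<le> integral\<^sup>L M (\<lambda>\<omega>. max (Gmax g T \<omega> - s) 0)"
      by (rule integral_mono[OF _ intmax]) (simp, smt (verit) GB1)
    then have I': "max (-B - s) 0 \<le> integral\<^sup>L M (\<lambda>\<omega>. max (Gmax g T \<omega> - s) 0)" by (simp add: prob_space del: max_def)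
    have "max (-B - s) 0 \<le> (1/\<alpha>) * integral\<^sup>L M (\<lambda>\<omega>. max (Gmax g T \<omega> - s) 0)"
    proof -
      have "1 \<le> 1 / \<alpha>" using \<alpha> by simp
      moreover have "0 \<le> integral\<^sup>L M (\<lambda>\<omega>. max (Gmax g T \<omega> - s) 0)" using I' by linarith
      ultimately have "integral\<^sup>L M (\<lambda>\<omega>. max (Gmax g T \<omega> - s) 0) \<le> (1/\<alpha>) * integral\<^sup>L M (\<lambda>\<omega>. max (Gmax g T \<omega> - s) 0)"
        by (metis mult_1 mult_right_mono)
      with I' show ?thesis by linarith
    qed
    then show "-B \<le> y" unfolding y \<phi>_def by linarith
  qed
  define s0 where "s0 = r - 1 / \<gamma>"
  define S where "S = (\<lambda>\<omega>::(nat \<Rightarrow> 's) \<times> (nat \<Rightarrow> 'a). \<Sum>t\<le>T. exp (\<gamma> * g (fst \<omega> t)))"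
  have Sm: "S \<in> borel_measurable M" unfolding S_def using gt by (intro borel_measurable_sum) auto
  have Sb: "\<bar>S \<omega>\<bar> \<le> (\<Sum>t\<le>T. exp (\<gamma> * B))" for \<omega>
  proof -
    have "S \<omega> \<le> (\<Sum>t\<le>T. exp (\<gamma> * B))" unfolding S_def
    proof (rule sum_mono)
      fix t show "exp (\<gamma> * g (fst \<omega> t)) \<le> exp (\<gamma> * B)"
        using B[of "fst \<omega> t"] \<gamma> by (simp add: abs_le_iff)
    qed
    moreover have "0 \<le> S \<omega>" unfolding S_def by (simp add: sum_nonneg)
    ultimately show ?thesis by simp
  qed
  have intS: "integrable M S"
    by (rule integrable_const_bound[where B="(\<Sum>t\<le>T. exp (\<gamma> * B))"])
       (use Sm Sb in auto)
  have pw: "max (Gmax g T \<omega> - s0) 0 \<le> (exp (- \<gamma> * r) / \<gamma>) * S \<omega>" for \<omega>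
  proof -
    define z where "z = \<gamma> * (Gmax g T \<omega> - s0)"
    have e1: "max z 0 \<le> exp (z - 1)"
      using exp_ge_add_one_self[of "z - 1"] by auto
    have "max (Gmax g T \<omega> - s0) 0 = max z 0 / \<gamma>" using \<gamma> unfolding z_def
      by (auto simp: max_def field_simps)
    also have "\<dots> \<le> exp (z - 1) / \<gamma>" using e1 \<gamma> by (simp add: divide_right_mono)
    also have "z - 1 = \<gamma> * Gmax g T \<omega> + (- \<gamma> * r)" using \<gamma> unfolding z_def s0_def by (simp add: field_simps)
    also have "exp (\<gamma> * Gmax g T \<omega> + (- \<gamma> * r)) = exp (- \<gamma> * r) * exp (\<gamma> * Gmax g T \<omega>)"
      by (simp only: exp_add mult.commute)
    also have "exp (\<gamma> * Gmax g T \<omega>) \<le> S \<omega>"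
    proof -
      obtain t where t: "t \<le> T" "Gmax g T \<omega> = g (fst \<omega> t)" using Gex by blast
      have "exp (\<gamma> * g (fst \<omega> t)) \<le> S \<omega>" unfolding S_def
        by (rule member_le_sum[where f="\<lambda>t. exp (\<gamma> * g (fst \<omega> t))"]) (use t in auto)
      then show ?thesis using t by simp
    qed
    then have "exp (- \<gamma> * r) * exp (\<gamma> * Gmax g T \<omega>) / \<gamma> \<le> exp (- \<gamma> * r) * S \<omega> / \<gamma>"
      using \<gamma> by (intro divide_right_mono mult_left_mono) auto
    finally show ?thesis by simp
  qed
  have "integral\<^sup>L M (\<lambda>\<omega>. max (Gmax g T \<omega> - s0) 0) \<le> integral\<^sup>L M (\<lambda>\<omega>. (exp (- \<gamma> * r) / \<gamma>) * S \<omega>)"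
    by (rule integral_mono[OF intmax]) (use intS pw in auto)
  also have "\<dots> = (exp (- \<gamma> * r) / \<gamma>) * integral\<^sup>L M S" by simp
  also have "\<dots> \<le> (exp (- \<gamma> * r) / \<gamma>) * (\<alpha> * exp (\<gamma> * r))"
  proof -
    have "integral\<^sup>L M S \<le> \<alpha> * exp (\<gamma> * r)" using hyp \<alpha> unfolding S_def by (simp add: field_simps)
    then show ?thesis using \<gamma> by (intro mult_left_mono) auto
  qed
  also have "\<dots> = \<alpha> / \<gamma>" by (simp add: mult_exp_exp)
  finally have "integral\<^sup>L M (\<lambda>\<omega>. max (Gmax g T \<omega> - s0) 0) \<le> \<alpha> / \<gamma>" .
  then have "(1/\<alpha>) * integral\<^sup>L M (\<lambda>\<omega>. max (Gmax g T \<omega> - s0) 0) \<le> 1 / \<gamma>"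
    using \<alpha> by (simp add: field_simps)
  then have "\<phi> s0 \<le> r" unfolding \<phi>_def s0_def by linarith
  then have "(INF s. \<phi> s) \<le> r" by (rule cINF_lower2[OF bdd UNIV_I])
  then show ?thesis unfolding CVaR_def \<phi>_def .
qed


lemma pol_bound:
  assumes PD: "prob_space PD"
    and f_meas: "f \<in> pair_measure Sx (pair_measure Ax PD) \<rightarrow>\<^sub>M Sx"
    and g_meas: "g \<in> borel_measurable Sx" and g_bdd: "bounded (range g)"
    and \<gamma>: "\<gamma> > 0" and \<alpha>: "0 < \<alpha>" "\<alpha> \<le> 1"
    and x: "x \<in> space Sx" and pi: "\<pi> \<in> policies Sx Ax T"
    and hyp: "exp_cost Sx Ax PD f T g \<alpha> \<gamma> x \<pi> \<le> exp (\<gamma> * r)"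
  shows "CVaR (path_measure Sx Ax PD f T x \<pi>) \<alpha> (Gmax g T) \<le> r"
proof -
  have "path_measure Sx Ax PD f T x \<pi> \<in> space (prob_algebra (hist_space Sx Ax T))"
    unfolding path_measure_def by (rule hist_prob[OF PD f_meas x pi]) simp
  then have P: "prob_space (path_measure Sx Ax PD f T x \<pi>)"
    and S: "sets (path_measure Sx Ax PD f T x \<pi>) = sets (hist_space Sx Ax T)"
    by (auto simp: space_prob_algebra)
  show ?thesis
    by (rule cvar_bound[OF P S g_meas g_bdd \<gamma> \<alpha>]) (use hyp in \<open>simp add: exp_cost_def\<close>)
qed

theorem theorem2:
  fixes Sx :: "'s measure" and Ax :: "'a measure" and PD :: "'w measure"
    and f :: "'s \<times> 'a \<times> 'w \<Rightarrow> 's" and T :: nat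
    and K :: "'s set" and g :: "'s \<Rightarrow> real"
    and \<alpha> \<gamma> r :: real
  assumes PD: "prob_space PD"
    and f_meas: "f \<in> pair_measure Sx (pair_measure Ax PD) \<rightarrow>\<^sub>M Sx"
    and K: "K \<in> sets Sx"
    and g_meas: "g \<in> borel_measurable Sx"
    and g_bdd: "bounded (range g)"
    and \<alpha>: "0 < \<alpha>" "\<alpha> \<le> 1"
    and \<gamma>: "\<gamma> \<ge> 1"
  shows "(\<forall>\<pi>\<in>policies Sx Ax T.
            approx_set_pol Sx Ax PD f T g \<alpha> \<gamma> r \<pi> \<subseteq> safe_set_pol Sx Ax PD f T g \<alpha> r \<pi>)
         \<and> approx_set_inf Sx Ax PD f T g \<alpha> \<gamma> r \<subseteq> safe_set_inf Sx Ax PD f T g \<alpha> r"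
proof
  have \<gamma>0: "\<gamma> > 0" using \<gamma> by simp
  show "\<forall>\<pi>\<in>policies Sx Ax T.
            approx_set_pol Sx Ax PD f T g \<alpha> \<gamma> r \<pi> \<subseteq> safe_set_pol Sx Ax PD f T g \<alpha> r \<pi>"
    using pol_bound[OF PD f_meas g_meas g_bdd \<gamma>0 \<alpha>]
    by (auto simp: approx_set_pol_def safe_set_pol_def)
  show "approx_set_inf Sx Ax PD f T g \<alpha> \<gamma> r \<subseteq> safe_set_inf Sx Ax PD f T g \<alpha> r"
  proof
    fix x assume "x \<in> approx_set_inf Sx Ax PD f T g \<alpha> \<gamma> r"
    then have x: "x \<in> space Sx"
      and h: "(INF \<pi>\<in>policies Sx Ax T. ereal (exp_cost Sx Ax PD f T g \<alpha> \<gamma> x \<pi>)) \<le> ereal (exp (\<gamma> * r))"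
      by (auto simp: approx_set_inf_def)
    have "(INF \<pi>\<in>policies Sx Ax T. ereal (CVaR (path_measure Sx Ax PD f T x \<pi>) \<alpha> (Gmax g T))) \<le> ereal r"
    proof (rule ereal_le_epsilon2)
      fix e :: real assume e: "0 < e"
      have "exp (\<gamma> * r) < exp (\<gamma> * (r + e))" using e \<gamma>0 by (simp add: algebra_simps)
      then have "ereal (exp (\<gamma> * r)) < ereal (exp (\<gamma> * (r + e)))" by simp
      with h have "(INF \<pi>\<in>policies Sx Ax T. ereal (exp_cost Sx Ax PD f T g \<alpha> \<gamma> x \<pi>)) < ereal (exp (\<gamma> * (r + e)))"
        by (rule order.strict_trans1)
      then obtain \<pi> where pi: "\<pi> \<in> policies Sx Ax T"
        and lt: "ereal (exp_cost Sx Ax PD f T g \<alpha> \<gamma> x \<pi>) < ereal (exp (\<gamma> * (r + e)))"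
        by (auto simp: INF_less_iff)
      have "CVaR (path_measure Sx Ax PD f T x \<pi>) \<alpha> (Gmax g T) \<le> r + e"
        by (rule pol_bound[OF PD f_meas g_meas g_bdd \<gamma>0 \<alpha> x pi]) (use lt in simp)
      then have "(INF \<pi>\<in>policies Sx Ax T. ereal (CVaR (path_measure Sx Ax PD f T x \<pi>) \<alpha> (Gmax g T))) \<le> ereal (r + e)"
        by (intro INF_lower2[OF pi]) simp
      then show "(INF \<pi>\<in>policies Sx Ax T. ereal (CVaR (path_measure Sx Ax PD f T x \<pi>) \<alpha> (Gmax g T))) \<le> ereal r + ereal e"
        by simp
    qed
    then show "x \<in> safe_set_inf Sx Ax PD f T g \<alpha> r" using x by (simp add: safe_set_inf_def)
  qed
qed

end
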